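(* Let $V$ be a vertex operator algebra, fix $n\in\mathbb{N}$, and let $u\in V$ be an element of weight $\mathrm{wt}\,u\ge -n$ such that the vertex subalgebra $V^u=\langle u\rangle^1$ satisfies the permutation property. Then $A_n^u$ is generated by the elements \[ u_{-2n-1}^{i_{2n+1}}u_{-2n}^{i_{2n}}\cdots u_{-1}^{i_1}\mathbf{1}+O_n(V),\qquad i_1,\dots,i_{2n+1}\in\mathbb{N}. \] Moreover, if $V^u$ acts strongly on a subset $W\subset V$, then every element of $A_n^u.W$ can be written, modulo $O_n^\circ(V)$, as a linear combination of elements $u_{-2n-1}^{i_{2n+1}}u_{-2n}^{i_{2n}}\cdots u_{-1}^{i_1}v+O_n(V)$ with $v\in W$ and $i_1,\dots,i_{2n+1}\in\mathbb{N}$.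
   Context: $V$ has vacuum $\mathbf{1}$, modes $Y(v,x)=\sum v_kx^{-k-1}$, Virasoro operators $L(m)$, weights $\mathrm{wt}$. For homogeneous $a$, $a\circ_nb=\mathrm{Res}_x(1+x)^{\mathrm{wt}\,a+n}Y(a,x)b\,x^{-2n-2}$; $O_n^\circ(V)=\mathrm{span}\{a\circ_nb\}$, $O^L(V)=\{(L(-1)+L(0))v\}$, $O_n(V)=O^L(V)+O_n^\circ(V)$, and $A_n(V)=V/O_n(V)$ is the level $n$ Zhu algebra with product $a*_nb=\sum_{m=0}^n(-1)^m\binom{m+n}{n}\mathrm{Res}_x(1+x)^{\mathrm{wt}\,a+n}Y(a,x)b\,x^{-n-m-1}$. $V^u=\langle u\rangle^1$ is the span of all $u_{-k_1}\cdots u_{-k_r}\mathbf{1}$ ($r\in\mathbb{N}$, $k_i\in\mathbb{Z}_+$), assumed to be a vertex subalgebra. For $v\in V$, $F_r(v)$ is the span of $u_{-k_1}\cdots u_{-k_p}v$ with $p\le r$ and $k_i\ge1$. The permutation property for $V^u$ acting on $W$ means: for all $m\in\mathbb{Z}_+$, permutations $\sigma$ of $\{1,\dots,m\}$, $u^{(1)},\dots,u^{(m)}\in V^u$, $v\in W$ and $k_1,\dots,k_m\in\mathbb{Z}$, $u^{(1)}_{-k_1}\cdots u^{(m)}_{-k_m}v-u^{(\sigma(1))}_{-k_{\sigma(1)}}\cdots u^{(\sigma(m))}_{-k_{\sigma(m)}}v\in F_{m-1}(v)$; "$V^u$ satisfies the permutation property" means this with $W=V^u$. $V^u$ acts strongly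 on $W$ if it satisfies the permutation property on $W$ and $a_jw=0$ for all $a\in V^u$, $w\in W$, $j\ge0$. $A_n^u$ is the subalgebra of $A_n(V)$ generated by $\{a+O_n(V):a\in V^u\}$, and $A_n^u.W$ is the set of elements $u_{-k_1}\cdots u_{-k_m}v+O_n(V)$ with $v\in W$, $m\in\mathbb{N}$, $k_i\in\mathbb{Z}_+$. *)

theory Defs
  imports Complex_Main "HOL-Combinatorics.Permutations"
begin

text \<open>A VOA is given by: the scalar multiplication of the underlying complex vector
space (the carrier is the whole type), the modes  md V a k b = a_k b  (so that
Y(a,x) b = sum_k a_k b x^(-k-1)), the vacuum, the conformal vector, and the
weight spaces V_(m), m an integer.\<close>

record 'v voa =
  scal :: "complex \<Rightarrow> 'v \<Rightarrow> 'v"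
  md   :: "'v \<Rightarrow> int \<Rightarrow> 'v \<Rightarrow> 'v"
  vac  :: 'v
  cv   :: 'v
  wsp  :: "int \<Rightarrow> 'v set"

text \<open>Sum of a finitely supported family (all families used below are finitely
supported by the truncation axiom).\<close>
definition fsum :: "(nat \<Rightarrow> 'v::ab_group_add) \<Rightarrow> 'v" where
  "fsum f = sum f {i. f i \<noteq> 0}"

definition ibin :: "int \<Rightarrow> nat \<Rightarrow> complex" where
  "ibin r i = (of_int r) gchoose i"

definition isgn :: "int \<Rightarrow> complex" where
  "isgn r = (if even r then 1 else -1)"

definition Lop :: "'v voa \<Rightarrow> int \<Rightarrow> 'v \<Rightarrow> 'v" where
  "Lop V m = md V (cv V) (m + 1)"

definition is_VOA :: "('v::ab_group_add) voa \<Rightarrow> bool" where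
  "is_VOA V \<longleftrightarrow>
     vector_space (scal V)
   \<and> (\<forall>a k. Vector_Spaces.linear (scal V) (scal V) (md V a k))
   \<and> (\<forall>k b. Vector_Spaces.linear (scal V) (scal V) (\<lambda>a. md V a k b))
   \<comment> \<open>grading V = direct sum of the V_(m)\<close>
   \<and> (\<forall>m. module.subspace (scal V) (wsp V m))
   \<and> (\<forall>v. \<exists>!f. finite {m. f m \<noteq> 0} \<and> (\<forall>m. f m \<in> wsp V m)
                \<and> v = (\<Sum>m\<in>{m. f m \<noteq> 0}. f m))
   \<and> (\<forall>m. \<exists>B. finite B \<and> wsp V m \<subseteq> module.span (scal V) B)
   \<and> (\<exists>N. \<forall>m<N. wsp V m = {0})
   \<comment> \<open>truncation\<close>
   \<and> (\<forall>a b. \<exists>K. \<forall>k\<ge>K. md V a k b = 0)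
   \<comment> \<open>vacuum and creation\<close>
   \<and> (\<forall>k b. md V (vac V) k b = (if k = -1 then b else 0))
   \<and> (\<forall>a k. k \<ge> 0 \<longrightarrow> md V a k (vac V) = 0)
   \<and> (\<forall>a. md V a (-1) (vac V) = a)
   \<comment> \<open>Jacobi identity (in Borcherds' component form)\<close>
   \<and> (\<forall>a b c p q r.
        fsum (\<lambda>i. scal V (ibin p i) (md V (md V a (r + int i) b) (p + q - int i) c))
      = fsum (\<lambda>i. scal V ((-1) ^ i * ibin r i)
                 (md V a (p + r - int i) (md V b (q + int i) c)
                  - scal V (isgn r) (md V b (q + r - int i) (md V a (p + int i) c)))))
   \<comment> \<open>conformal vector\<close>
   \<and> cv V \<in> wsp V 2
   \<and> (\<exists>c::complex. \<forall>m k v.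
        Lop V m (Lop V k v) - Lop V k (Lop V m v)
      = scal V (of_int (m - k)) (Lop V (m + k) v)
        + (if m + k = 0 then scal V (of_int (m ^ 3 - m) / 12 * c) v else 0))
   \<and> (\<forall>m. \<forall>v\<in>wsp V m. Lop V 0 v = scal V (of_int m) v)
   \<and> (\<forall>a k b. md V (Lop V (-1) a) k b = scal V (- of_int k) (md V a (k - 1) b))"

definition hcomp :: "('v::ab_group_add) voa \<Rightarrow> 'v \<Rightarrow> int \<Rightarrow> 'v" where
  "hcomp V v = (THE f. finite {m. f m \<noteq> 0} \<and> (\<forall>m. f m \<in> wsp V m)
                       \<and> v = (\<Sum>m\<in>{m. f m \<noteq> 0}. f m))"

text \<open>a o_n b for a homogeneous of weight wa:
  Res_x (1+x)^(wa+n) Y(a,x) b x^(-2n-2) = sum_i binom(wa+n,i) a_(i-2n-2) b.\<close>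
definition circ_hom :: "('v::ab_group_add) voa \<Rightarrow> nat \<Rightarrow> int \<Rightarrow> 'v \<Rightarrow> 'v \<Rightarrow> 'v" where
  "circ_hom V n wa a b =
     fsum (\<lambda>i. scal V (ibin (wa + int n) i) (md V a (int i - 2 * int n - 2) b))"

definition Ocirc :: "('v::ab_group_add) voa \<Rightarrow> nat \<Rightarrow> 'v set" where
  "Ocirc V n = module.span (scal V) {circ_hom V n m a b | m a b. a \<in> wsp V m}"

definition OL :: "('v::ab_group_add) voa \<Rightarrow> 'v set" where
  "OL V = {Lop V (-1) v + Lop V 0 v | v. True}"

definition On :: "('v::ab_group_add) voa \<Rightarrow> nat \<Rightarrow> 'v set" where
  "On V n = {x + y | x y. x \<in> OL V \<and> y \<in> Ocirc V n}"

definition star_hom :: "('v::ab_group_add) voa \<Rightarrow> nat \<Rightarrow> int \<Rightarrow> 'v \<Rightarrow> 'v \<Rightarrow> 'v" where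
  "star_hom V n wa a b =
     (\<Sum>m\<le>n. scal V ((-1) ^ m * of_nat ((m + n) choose n))
        (fsum (\<lambda>i. scal V (ibin (wa + int n) i)
                     (md V a (int i - int n - int m - 1) b))))"

definition star :: "('v::ab_group_add) voa \<Rightarrow> nat \<Rightarrow> 'v \<Rightarrow> 'v \<Rightarrow> 'v" where
  "star V n a b = (\<Sum>m\<in>{m. hcomp V a m \<noteq> 0}. star_hom V n m (hcomp V a m) b)"

text \<open>Preimage in V of the subalgebra of A_n(V) = V/O_n(V) generated by the
images of the elements of G.\<close>
inductive_set zhu_gen :: "('v::ab_group_add) voa \<Rightarrow> nat \<Rightarrow> 'v set \<Rightarrow> 'v set"
  for V n G where
  gen: "a \<in> G \<Longrightarrow> a \<in> zhu_gen V n G"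
| ideal: "x \<in> On V n \<Longrightarrow> x \<in> zhu_gen V n G"
| add: "x \<in> zhu_gen V n G \<Longrightarrow> y \<in> zhu_gen V n G \<Longrightarrow> x + y \<in> zhu_gen V n G"
| smult: "x \<in> zhu_gen V n G \<Longrightarrow> scal V c x \<in> zhu_gen V n G"
| mult: "x \<in> zhu_gen V n G \<Longrightarrow> y \<in> zhu_gen V n G \<Longrightarrow> star V n x y \<in> zhu_gen V n G"

definition umon :: "('v::ab_group_add) voa \<Rightarrow> 'v \<Rightarrow> int list \<Rightarrow> 'v \<Rightarrow> 'v" where
  "umon V u ks v = foldr (\<lambda>k w. md V u (- k) w) ks v"

definition Vu :: "('v::ab_group_add) voa \<Rightarrow> 'v \<Rightarrow> 'v set" where
  "Vu V u = module.span (scal V) {umon V u ks (vac V) | ks. \<forall>k\<in>set ks. k \<ge> 1}"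

definition Ffilt :: "('v::ab_group_add) voa \<Rightarrow> 'v \<Rightarrow> nat \<Rightarrow> 'v \<Rightarrow> 'v set" where
  "Ffilt V u r v = module.span (scal V)
     {umon V u ks v | ks. length ks \<le> r \<and> (\<forall>k\<in>set ks. k \<ge> 1)}"

definition gmon :: "('v::ab_group_add) voa \<Rightarrow> 'v list \<Rightarrow> int list \<Rightarrow> 'v \<Rightarrow> 'v" where
  "gmon V as ks v = foldr (\<lambda>(a, k) w. md V a (- k) w) (zip as ks) v"

definition perm_prop :: "('v::ab_group_add) voa \<Rightarrow> 'v \<Rightarrow> 'v set \<Rightarrow> bool" where
  "perm_prop V u W \<longleftrightarrow>
     (\<forall>m::nat. \<forall>\<sigma> as ks v. m \<ge> 1 \<and> \<sigma> permutes {..<m} \<and> length as = m \<and> length ks = m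
        \<and> set as \<subseteq> Vu V u \<and> v \<in> W \<longrightarrow>
        gmon V as ks v - gmon V (map (\<lambda>i. as ! \<sigma> i) [0..<m]) (map (\<lambda>i. ks ! \<sigma> i) [0..<m]) v
          \<in> Ffilt V u (m - 1) v)"

definition acts_strongly :: "('v::ab_group_add) voa \<Rightarrow> 'v \<Rightarrow> 'v set \<Rightarrow> bool" where
  "acts_strongly V u W \<longleftrightarrow> perm_prop V u W
     \<and> (\<forall>a\<in>Vu V u. \<forall>w\<in>W. \<forall>j::int. j \<ge> 0 \<longrightarrow> md V a j w = 0)"

text \<open>u_(-2n-1)^(i_(2n+1)) ... u_(-1)^(i_1) v.\<close>
definition ordmon :: "('v::ab_group_add) voa \<Rightarrow> 'v \<Rightarrow> nat \<Rightarrow> (nat \<Rightarrow> nat) \<Rightarrow> 'v \<Rightarrow> 'v" where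
  "ordmon V u n i v = fold (\<lambda>j w. (md V u (- int j) ^^ i j) w) [1..<2 * n + 2] v"

text \<open>Representatives of the elements of A_n^u.W.\<close>
definition AuW_reps :: "('v::ab_group_add) voa \<Rightarrow> 'v \<Rightarrow> 'v set \<Rightarrow> 'v set" where
  "AuW_reps V u W = {umon V u ks v | ks v. v \<in> W \<and> (\<forall>k\<in>set ks. k \<ge> 1)}"

end

theory Submission
  imports Defs
begin

fun dfac :: "nat \<Rightarrow> int \<Rightarrow> complex" where
  "dfac 0 k = 1"
| "dfac (Suc p) k = - of_int k * dfac p (k - 1)"

lemma dfac_nz: "k < 0 \<Longrightarrow> dfac p k \<noteq> 0"
  by (induction p arbitrary: k) auto

lemma fsum_eq_lessThan:
  fixes g :: "nat \<Rightarrow> 'v::ab_group_add"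
  assumes "\<And>i. i \<ge> N \<Longrightarrow> g i = 0"
  shows "fsum g = sum g {..<N}"
proof -
  have sub: "{i. g i \<noteq> 0} \<subseteq> {..<N}" using assms not_le by auto
  show ?thesis unfolding fsum_def
    by (rule sum.mono_neutral_left) (use sub in auto)
qed

definition olist :: "nat \<Rightarrow> (nat \<Rightarrow> nat) \<Rightarrow> int list" where
  "olist n i = concat (map (\<lambda>j. replicate (i j) (int j)) (rev [1..<2 * n + 2]))"

lemma umon_append: "umon V u (a @ b) v = umon V u a (umon V u b v)"
  unfolding umon_def by simp

lemma umon_replicate: "umon V u (replicate c k) w = (md V u (- k) ^^ c) w"
  unfolding umon_def by (induction c) auto

lemma fold_umon:
  "fold (\<lambda>j w. (md V u (- int j) ^^ i j) w) xs v
     = umon V u (concat (map (\<lambda>j. replicate (i j) (int j)) (rev xs))) v"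
proof (induction xs arbitrary: v)
  case Nil
  then show ?case by (simp add: umon_def)
next
  case (Cons x xs)
  show ?case by (simp add: Cons umon_append umon_replicate)
qed

lemma ordmon_umon: "ordmon V u n i v = umon V u (olist n i) v"
  unfolding ordmon_def olist_def by (rule fold_umon)

lemma olist_ge1: "k \<in> set (olist n i) \<Longrightarrow> k \<ge> 1"
  unfolding olist_def by auto

lemma count_concat_rep:
  "count (mset (concat (map (\<lambda>j. replicate (i j) (int j)) xs))) k = (\<Sum>j\<leftarrow>xs. if int j = k then i j else 0)"
  by (induction xs) auto

lemma count_olist:
  "count (mset (olist n i)) k = (if 1 \<le> k \<and> k \<le> 2 * int n + 1 then i (nat k) else 0)"
proof -
  have d: "distinct (rev [1..<2 * n + 2])" by simp
  have "count (mset (olist n i)) k = (\<Sum>j\<leftarrow>rev [1..<2 * n + 2]. if int j = k then i j else 0)"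
    unfolding olist_def by (rule count_concat_rep)
  also have "\<dots> = (\<Sum>j\<in>{1..<2 * n + 2}. if int j = k then i j else 0)"
    by (simp only: sum_list_distinct_conv_sum_set[OF d] set_rev set_upt)
  also have "\<dots> = (if 1 \<le> k \<and> k \<le> 2 * int n + 1 then i (nat k) else 0)"
  proof (cases "1 \<le> k \<and> k \<le> 2 * int n + 1")
    case True
    have "(\<Sum>j\<in>{1..<2 * n + 2}. if int j = k then i j else 0) = (\<Sum>j\<in>{1..<2 * n + 2}. if j = nat k then i (nat k) else 0)"
      by (intro sum.cong) (use True in auto)
    also have "\<dots> = i (nat k)" using True by (subst sum.delta) auto
    finally show ?thesis using True by simp
  next
    case False
    then show ?thesis by (intro trans[OF sum.neutral]) auto
  qed
  finally show ?thesis .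
qed

lemma mset_olist:
  assumes "\<forall>k\<in>set ks. 1 \<le> k \<and> k \<le> 2 * int n + 1"
  shows "mset ks = mset (olist n (\<lambda>j. count (mset ks) (int j)))"
proof (rule multiset_eqI)
  fix k
  show "count (mset ks) k = count (mset (olist n (\<lambda>j. count (mset ks) (int j)))) k"
    unfolding count_olist using assms by (auto simp: count_eq_zero_iff)
qed

lemma gmon_rep: "gmon V (replicate (length ks) u) ks v = umon V u ks v"
  unfolding gmon_def umon_def by (induction ks) auto

locale voa_ctx = fixes V :: "('v::ab_group_add) voa" assumes isv: "is_VOA V"
begin

lemma ax_vs: "vector_space (scal V)"
  using isv unfolding is_VOA_def by (elim conjE) assumption
lemma ax_lin: "\<forall>a k. Vector_Spaces.linear (scal V) (scal V) (md V a k)"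
  using isv unfolding is_VOA_def by (elim conjE) assumption
lemma ax_lin2: "\<forall>k b. Vector_Spaces.linear (scal V) (scal V) (\<lambda>a. md V a k b)"
  using isv unfolding is_VOA_def by (elim conjE) assumption
lemma ax_sub: "\<forall>m. module.subspace (scal V) (wsp V m)"
  using isv unfolding is_VOA_def by (elim conjE) assumption
lemma ax_grad: "\<forall>v. \<exists>!f. finite {m. f m \<noteq> 0} \<and> (\<forall>m. f m \<in> wsp V m)
                \<and> v = (\<Sum>m\<in>{m. f m \<noteq> 0}. f m)"
  using isv unfolding is_VOA_def by (elim conjE) assumption
lemma ax_trunc: "\<forall>a b. \<exists>K. \<forall>k\<ge>K. md V a k b = 0"
  using isv unfolding is_VOA_def by (elim conjE) assumption
lemma ax_vacmd: "\<forall>k b. md V (vac V) k b = (if k = -1 then b else 0)"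
  using isv unfolding is_VOA_def by (elim conjE) assumption
lemma ax_cre: "\<forall>a k. k \<ge> 0 \<longrightarrow> md V a k (vac V) = 0"
  using isv unfolding is_VOA_def by (elim conjE) assumption
lemma ax_cre1: "\<forall>a. md V a (-1) (vac V) = a"
  using isv unfolding is_VOA_def by (elim conjE) assumption
lemma ax_vir: "\<exists>c::complex. \<forall>m k v.
        Lop V m (Lop V k v) - Lop V k (Lop V m v)
      = scal V (of_int (m - k)) (Lop V (m + k) v)
        + (if m + k = 0 then scal V (of_int (m ^ 3 - m) / 12 * c) v else 0)"
  using isv unfolding is_VOA_def by (elim conjE) assumption
lemma ax_L0: "\<forall>m. \<forall>v\<in>wsp V m. Lop V 0 v = scal V (of_int m) v"
  using isv unfolding is_VOA_def by (elim conjE) assumption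
lemma ax_der: "\<forall>a k b. md V (Lop V (-1) a) k b = scal V (- of_int k) (md V a (k - 1) b)"
  using isv unfolding is_VOA_def by (elim conjE) assumption

sublocale vs: vector_space "scal V"
  by (rule ax_vs)

lemma mh: "module_hom (scal V) (scal V) (md V a k)"
  using ax_lin linear_iff_module_hom by blast
lemma mh2: "module_hom (scal V) (scal V) (\<lambda>a. md V a k b)"
  using ax_lin2 linear_iff_module_hom by blast

lemma md_scale: "md V a k (scal V c b) = scal V c (md V a k b)"
  using module_hom.scale[OF mh] by blast
lemma md_zero[simp]: "md V a k 0 = 0"
  using module_hom.zero[OF mh] by blast
lemma md_add: "md V a k (x + y) = md V a k x + md V a k y"
  using module_hom.add[OF mh] by blast
lemma md_diff: "md V a k (x - y) = md V a k x - md V a k y"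
  using module_hom.diff[OF mh] by blast
lemma md_sum: "md V a k (sum g S) = (\<Sum>i\<in>S. md V a k (g i))"
  using module_hom.sum[OF mh] by blast
lemma md_lscale: "md V (scal V c a) k b = scal V c (md V a k b)"
  using module_hom.scale[OF mh2, of c a] by simp


lemma Lop_lin_scale: "Lop V k (scal V c x) = scal V c (Lop V k x)"
  unfolding Lop_def by (rule md_scale)
lemma Lop_sum: "Lop V k (sum g S) = (\<Sum>i\<in>S. Lop V k (g i))"
  unfolding Lop_def by (rule md_sum)

lemma eigen_wsp:
  assumes L: "Lop V 0 x = scal V (of_int c) x"
  shows "x \<in> wsp V c"
proof -
  obtain f where f1: "finite {m. f m \<noteq> 0}" and f2: "\<forall>m. f m \<in> wsp V m"
     and f3: "x = sum f {m. f m \<noteq> 0}"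
    using ax_grad by blast
  define A where "A = {m. f m \<noteq> 0}"
  have uq: "\<exists>!g. finite {m. g m \<noteq> 0} \<and> (\<forall>m. g m \<in> wsp V m) \<and> (0::'v) = sum g {m. g m \<noteq> 0}"
    using ax_grad by blast
  have z: "finite {m. (\<lambda>_. (0::'v)) m \<noteq> 0} \<and> (\<forall>m. (\<lambda>_. (0::'v)) m \<in> wsp V m) \<and> (0::'v) = sum (\<lambda>_. (0::'v)) {m. (\<lambda>_. (0::'v)) m \<noteq> 0}"
    using ax_sub vs.subspace_0 by auto
  define g where "g m = scal V (of_int m - of_int c) (f m)" for m
  have g2: "\<forall>m. g m \<in> wsp V m" using ax_sub f2 vs.subspace_scale g_def by auto
  have gsup: "{m. g m \<noteq> 0} \<subseteq> A" unfolding g_def A_def by auto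
  have g1: "finite {m. g m \<noteq> 0}" using gsup f1 A_def finite_subset by auto
  have "sum g {m. g m \<noteq> 0} = sum g A"
    by (rule sum.mono_neutral_left) (use gsup f1 A_def in auto)
  also have "\<dots> = (\<Sum>m\<in>A. scal V (of_int m) (f m)) - (\<Sum>m\<in>A. scal V (of_int c) (f m))"
    unfolding g_def by (simp add: vs.scale_left_diff_distrib sum_subtractf)
  also have "(\<Sum>m\<in>A. scal V (of_int m) (f m)) = Lop V 0 x"
    proof -
    have e: "\<And>m. Lop V 0 (f m) = scal V (of_int m) (f m)" using ax_L0 f2 by blast
    show ?thesis unfolding f3 Lop_sum A_def e ..
  qed
  also have "(\<Sum>m\<in>A. scal V (of_int c) (f m)) = scal V (of_int c) x"
    unfolding f3 A_def by (simp add: vs.scale_sum_right)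
  finally have gs: "0 = sum g {m. g m \<noteq> 0}" using L by simp
  obtain h where h1: "finite {m. h m \<noteq> 0} \<and> (\<forall>m. h m \<in> wsp V m) \<and> (0::'v) = sum h {m. h m \<noteq> 0}"
    and h2: "\<And>y. finite {m. y m \<noteq> 0} \<and> (\<forall>m. y m \<in> wsp V m) \<and> (0::'v) = sum y {m. y m \<noteq> 0} \<Longrightarrow> y = h"
    using uq by (elim ex1E) blast
  have "g = h" by (rule h2) (use g1 g2 gs in blast)
  moreover have "(\<lambda>_. 0) = h" by (rule h2) (rule z)
  ultimately have gz: "\<And>m. g m = 0" by metis
  have fz: "\<And>m. m \<noteq> c \<Longrightarrow> f m = 0"
  proof -
    fix m assume "m \<noteq> c"
    then have "of_int m - of_int c \<noteq> (0::complex)" by simp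
    then show "f m = 0" using gz[of m] unfolding g_def by simp
  qed
  have "x = (if c \<in> A then f c else 0)"
  proof (cases "c \<in> A")
    case True
    then have "A = {c}" using fz unfolding A_def by auto
    then show ?thesis using f3 A_def True by simp
  next
    case False
    then have "A = {}" using fz unfolding A_def by (auto, metis)
    then show ?thesis using f3 A_def False by simp
  qed
  then show ?thesis using f2 ax_sub vs.subspace_0 by auto
qed

lemma Lm1_wsp:
  assumes "a \<in> wsp V m"
  shows "Lop V (-1) a \<in> wsp V (m + 1)"
proof -
  obtain c where c: "\<forall>m k v.
        Lop V m (Lop V k v) - Lop V k (Lop V m v)
      = scal V (of_int (m - k)) (Lop V (m + k) v)
        + (if m + k = 0 then scal V (of_int (m ^ 3 - m) / 12 * c) v else 0)"
    using ax_vir by blast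
  have "Lop V 0 (Lop V (-1) a) - Lop V (-1) (Lop V 0 a) = scal V 1 (Lop V (-1) a)"
    using c[rule_format, of 0 "-1" a] by simp
  moreover have "Lop V 0 a = scal V (of_int m) a" using ax_L0 assms by blast
  ultimately have "Lop V 0 (Lop V (-1) a) = scal V (of_int m) (Lop V (-1) a) + Lop V (-1) a"
    by (simp add: Lop_lin_scale algebra_simps)
  also have "\<dots> = scal V (of_int (m+1)) (Lop V (-1) a)"
    by (simp add: vs.scale_left_distrib)
  finally show ?thesis by (rule eigen_wsp)
qed


lemma md_Lpow: "md V ((Lop V (-1) ^^ p) a) k b = scal V (dfac p k) (md V a (k - int p) b)"
proof (induction p arbitrary: k)
  case 0
  then show ?case by simp
next
  case (Suc p)
  have "md V ((Lop V (-1) ^^ Suc p) a) k b = md V (Lop V (-1) ((Lop V (-1) ^^ p) a)) k b" by simp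
  also have "\<dots> = scal V (- of_int k) (md V ((Lop V (-1) ^^ p) a) (k - 1) b)" using ax_der by blast
  also have "\<dots> = scal V (dfac (Suc p) k) (md V a (k - int (Suc p)) b)"
    using Suc by (simp add: algebra_simps)
  finally show ?case .
qed

lemma Lpow_wsp: "a \<in> wsp V m \<Longrightarrow> (Lop V (-1) ^^ p) a \<in> wsp V (m + int p)"
proof (induction p)
  case 0
  then show ?case by simp
next
  case (Suc p)
  then show ?case using Lm1_wsp[of "(Lop V (-1) ^^ p) a" "m + int p"] by (simp add: algebra_simps)
qed

definition OG :: "nat \<Rightarrow> 'v set" where
  "OG n = {circ_hom V n m a b | m a b. a \<in> wsp V m}"

lemma Ocirc_OG: "Ocirc V n = vs.span (OG n)"
  unfolding Ocirc_def OG_def ..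

lemma reduce_mode:
  assumes u: "u \<in> wsp V wtu" and k: "k \<ge> 2 * int n + 2"
  shows "md V u (-k) w \<in> vs.span ({md V u (-j) w | j. j < k} \<union> OG n)"
proof -
  define p where "p = nat (k - 2 * int n - 2)"
  have kp: "k = 2 * int n + 2 + int p" using k p_def by simp
  define a where "a = (Lop V (-1) ^^ p) u"
  have aw: "a \<in> wsp V (wtu + int p)" unfolding a_def by (rule Lpow_wsp[OF u])
  define g where "g i = scal V (ibin (wtu + int p + int n) i) (md V a (int i - 2 * int n - 2) w)" for i
  have g': "g i = scal V (ibin (wtu + int p + int n) i * dfac p (int i - 2 * int n - 2)) (md V u (int i - k) w)" for i
    unfolding g_def a_def md_Lpow by (simp add: kp algebra_simps)
  obtain K where K: "\<forall>j\<ge>K. md V u j w = 0" using ax_trunc by blast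
  define N where "N = nat (K + k) + 1"
  have gN: "g i = 0" if "i \<ge> N" for i
  proof -
    have "int i - k \<ge> K" using that N_def by linarith
    then show ?thesis unfolding g' using K by simp
  qed
  have N1: "N \<ge> 1" unfolding N_def by simp
  have circ: "circ_hom V n (wtu + int p) a w = sum g {..<N}"
    unfolding circ_hom_def g_def[symmetric] by (rule fsum_eq_lessThan) (rule gN)
  have split: "{..<N} = insert 0 {1..<N}" using N1 by auto
  have "sum g {..<N} = g 0 + sum g {1..<N}" unfolding split by simp
  moreover have "g 0 = scal V (dfac p (- 2 * int n - 2)) (md V u (-k) w)"
    unfolding g' by (simp add: ibin_def)
  ultimately have eq: "scal V (dfac p (- 2 * int n - 2)) (md V u (-k) w) = circ_hom V n (wtu + int p) a w - sum g {1..<N}"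
    using circ by simp
  define c where "c = dfac p (- 2 * int n - 2)"
  have cnz: "c \<noteq> 0" unfolding c_def by (rule dfac_nz) simp
  have mdeq: "md V u (-k) w = scal V (inverse c) (circ_hom V n (wtu + int p) a w - sum g {1..<N})"
    using eq cnz unfolding c_def[symmetric] by (metis vs.scale_one vs.scale_scale field_class.field_inverse mult.commute)
  let ?S = "{md V u (-j) w | j. j < k} \<union> OG n"
  have c1: "circ_hom V n (wtu + int p) a w \<in> vs.span ?S"
    by (rule vs.span_base) (use aw in \<open>auto simp: OG_def\<close>)
  have c2: "sum g {1..<N} \<in> vs.span ?S"
  proof (rule vs.span_sum)
    fix i assume "i \<in> {1..<N}"
    then have "k - int i < k" by auto
    then have "md V u (int i - k) w \<in> ?S" by (auto intro!: exI[of _ "k - int i"])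
    then show "g i \<in> vs.span ?S" unfolding g' by (intro vs.span_scale vs.span_base)
  qed
  show ?thesis unfolding mdeq by (intro vs.span_scale vs.span_diff c1 c2)
qed


lemma umon_zero: "umon V u ks 0 = 0"
  by (induction ks) (simp_all add: umon_def)

lemma vac_Vu: "vac V \<in> Vu V u"
  unfolding Vu_def by (rule vs.span_base) (auto intro!: exI[of _ "[]"] simp: umon_def)

lemma u_Vu: "u \<in> Vu V u"
proof -
  have "umon V u [1] (vac V) = u" unfolding umon_def using ax_cre1 by simp
  then show ?thesis unfolding Vu_def by (intro vs.span_base) (auto intro!: exI[of _ "[1]"])
qed

lemma perm_umon:
  assumes pp: "perm_prop V u W" and v: "v \<in> W" and ms: "mset ks = mset ks'" and l: "length ks \<ge> 1"
  shows "umon V u ks v - umon V u ks' v \<in> Ffilt V u (length ks - 1) v"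
proof -
  obtain p where p: "p permutes {..<length ks}" "permute_list p ks = ks'"
    using mset_eq_permutation[OF ms[symmetric]] by blast
  define m where "m = length ks"
  have pi: "i < m \<Longrightarrow> p i < m" for i using p(1) m_def permutes_in_image by fastforce
  have a1: "map (\<lambda>i. replicate m u ! p i) [0..<m] = replicate m u"
    by (rule nth_equalityI) (auto simp: pi)
  have a2: "map (\<lambda>i. ks ! p i) [0..<m] = ks'" using p(2) unfolding permute_list_def m_def .
  have PP: "\<And>m \<sigma> as ks v. m \<ge> 1 \<and> \<sigma> permutes {..<m} \<and> length as = m \<and> length ks = m
        \<and> set as \<subseteq> Vu V u \<and> v \<in> W \<Longrightarrow>
        gmon V as ks v - gmon V (map (\<lambda>i. as ! \<sigma> i) [0..<m]) (map (\<lambda>i. ks ! \<sigma> i) [0..<m]) v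
          \<in> Ffilt V u (m - 1) v"
    using pp unfolding perm_prop_def by blast
  have setr: "set (replicate m u) \<subseteq> Vu V u" using u_Vu by (simp add: set_replicate_conv_if)
  have "gmon V (replicate m u) ks v - gmon V (map (\<lambda>i. replicate m u ! p i) [0..<m]) (map (\<lambda>i. ks ! p i) [0..<m]) v
      \<in> Ffilt V u (m - 1) v"
    by (rule PP) (use l p(1) v setr m_def in auto)
  then have "gmon V (replicate m u) ks v - gmon V (replicate m u) ks' v \<in> Ffilt V u (m - 1) v"
    unfolding a1 a2 .
  moreover have "length ks' = m" using ms m_def by (metis mset_eq_length)
  moreover have "gmon V (replicate m u) ks v = umon V u ks v" using gmon_rep m_def by metis
  ultimately show ?thesis using gmon_rep m_def by metis
qed

lemma nonneg_mode:
  assumes pp: "perm_prop V u W" and v: "v \<in> W" and z: "md V u j v = 0" and j: "j \<ge> 0"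
  shows "md V u j (umon V u ks v) \<in> Ffilt V u (length ks) v"
proof -
  have ms: "mset ((-j) # ks) = mset (ks @ [-j])" by simp
  have "umon V u ((-j) # ks) v - umon V u (ks @ [-j]) v \<in> Ffilt V u (length ((-j) # ks) - 1) v"
    by (rule perm_umon[OF pp v ms]) simp
  moreover have "umon V u ((-j) # ks) v = md V u j (umon V u ks v)" by (simp add: umon_def)
  moreover have "umon V u (ks @ [-j]) v = 0"
  proof -
    have "umon V u [-j] v = 0" by (simp add: umon_def z)
    then show ?thesis by (simp add: umon_append umon_zero)
  qed
  ultimately show ?thesis by simp
qed


lemma main_red:
  assumes u: "u \<in> wsp V wtu" and pp: "perm_prop V u W" and v: "v \<in> W"
    and z: "\<forall>j\<ge>0. md V u j v = 0"
  shows "\<forall>ks. length ks = m \<longrightarrow> (\<forall>k\<in>set ks. k \<ge> 1) \<longrightarrow>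
           umon V u ks v \<in> vs.span ({ordmon V u n i v' | i v'. v' \<in> W} \<union> OG n)"
proof (induction m rule: less_induct)
  case (less m)
  note OIH = less.IH
  define T where "T = vs.span ({ordmon V u n i v' | i v'. v' \<in> W} \<union> OG n)"
  have Tsub: "vs.subspace T" unfolding T_def by (rule vs.subspace_span)
  have Fsub: "Ffilt V u (m - 1) v \<subseteq> T" if m1: "m \<ge> 1"
    unfolding Ffilt_def
  proof (rule vs.span_minimal[OF _ Tsub])
    show "{umon V u ks v |ks. length ks \<le> m - 1 \<and> (\<forall>k\<in>set ks. 1 \<le> k)} \<subseteq> T"
    proof
      fix x assume "x \<in> {umon V u ks v |ks. length ks \<le> m - 1 \<and> (\<forall>k\<in>set ks. 1 \<le> k)}"
      then obtain ks where x: "x = umon V u ks v" "length ks \<le> m - 1" "\<forall>k\<in>set ks. 1 \<le> k" by blast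
      have "length ks < m" using x(2) m1 by linarith
      then show "x \<in> T" using OIH x unfolding T_def by blast
    qed
  qed
  have OGT: "OG n \<subseteq> T" unfolding T_def using vs.span_superset by blast
  have ordT: "ordmon V u n i v \<in> T" for i
    unfolding T_def by (rule vs.span_base) (use v in blast)
  have "\<forall>ks. nat (sum_list ks) = s \<longrightarrow> length ks = m \<longrightarrow> (\<forall>k\<in>set ks. k \<ge> 1) \<longrightarrow> umon V u ks v \<in> T" for s
  proof (induction s rule: less_induct)
    case (less s)
    show ?case
    proof (intro allI impI)
      fix ks assume s: "nat (sum_list ks) = s" and l: "length ks = m" and g1: "\<forall>k\<in>set ks. k \<ge> 1"
      show "umon V u ks v \<in> T"
      proof (cases "\<forall>k\<in>set ks. k \<le> 2 * int n + 1")
        case True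
        define i where "i = (\<lambda>j. count (mset ks) (int j))"
        have ms: "mset ks = mset (olist n i)" unfolding i_def by (rule mset_olist) (use True g1 in auto)
        have o: "umon V u (olist n i) v \<in> T" using ordT ordmon_umon by metis
        show ?thesis
        proof (cases "m = 0")
          case True
          then have "ks = []" using l by simp
          then have "olist n i = []" using ms by simp
          then show ?thesis using o \<open>ks = []\<close> by simp
        next
          case False
          have "umon V u ks v - umon V u (olist n i) v \<in> Ffilt V u (length ks - 1) v"
            by (rule perm_umon[OF pp v ms]) (use False l in auto)
          then have d: "umon V u ks v - umon V u (olist n i) v \<in> T" using Fsub False l by auto
          have "umon V u ks v = (umon V u ks v - umon V u (olist n i) v) + umon V u (olist n i) v" by simp
          then show ?thesis using vs.subspace_add[OF Tsub d o] by simp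
        qed
      next
        case False
        then obtain k where k: "k \<in> set ks" "k > 2 * int n + 1" by auto
        define rest where "rest = remove1 k ks"
        have ms: "mset ks = mset (k # rest)" using k by (simp add: rest_def)
        have m1: "m \<ge> 1" using k l by (cases ks) auto
        have lr: "length rest = m - 1" using l k unfolding rest_def by (simp add: length_remove1)
        have rg1: "\<forall>k\<in>set rest. k \<ge> 1" using g1 unfolding rest_def by (meson notin_set_remove1)
        have "umon V u ks v - umon V u (k # rest) v \<in> Ffilt V u (length ks - 1) v"
          by (rule perm_umon[OF pp v ms]) (use m1 l in auto)
        then have d: "umon V u ks v - umon V u (k # rest) v \<in> T" using Fsub m1 l by auto
        have red: "md V u (-k) (umon V u rest v) \<in> vs.span ({md V u (-j) (umon V u rest v) | j. j < k} \<union> OG n)"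
          by (rule reduce_mode[OF u]) (use k in auto)
        have sl: "sum_list ks = k + sum_list rest"
          using ms by (metis sum_mset_sum_list sum_list.Cons)
        have srest: "sum_list rest \<ge> 0" using rg1 by (intro sum_list_nonneg) auto
        have sub: "{md V u (-j) (umon V u rest v) | j. j < k} \<union> OG n \<subseteq> T"
        proof -
          have "md V u (-j) (umon V u rest v) \<in> T" if jk: "j < k" for j
          proof (cases "j \<ge> 1")
            case True
            have e: "umon V u (j # rest) v = md V u (-j) (umon V u rest v)" by (simp add: umon_def)
            have "nat (sum_list (j # rest)) < s" using s sl srest jk True by simp
            moreover have "length (j # rest) = m" using lr m1 by simp
            moreover have "\<forall>k\<in>set (j # rest). k \<ge> 1" using rg1 True by simp
            ultimately show ?thesis using less.IH e by metis
          next
            case False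
            have "md V u (-j) (umon V u rest v) \<in> Ffilt V u (length rest) v"
              by (rule nonneg_mode[OF pp v]) (use z False in auto)
            then show ?thesis using Fsub m1 lr by auto
          qed
          then show ?thesis using OGT by blast
        qed
        have "md V u (-k) (umon V u rest v) \<in> T"
          using red vs.span_minimal[OF sub Tsub] by blast
        moreover have "umon V u (k # rest) v = md V u (-k) (umon V u rest v)" by (simp add: umon_def)
        ultimately have o: "umon V u (k # rest) v \<in> T" by simp
        have "umon V u ks v = (umon V u ks v - umon V u (k # rest) v) + umon V u (k # rest) v" by simp
        then show ?thesis using vs.subspace_add[OF Tsub d o] by simp
      qed
    qed
  qed
  then show ?case unfolding T_def by blast
qed

end

lemma zhu_gen_mono:
  assumes "G \<subseteq> zhu_gen V n H"
  shows "zhu_gen V n G \<subseteq> zhu_gen V n H"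
proof
  fix x assume "x \<in> zhu_gen V n G"
  then show "x \<in> zhu_gen V n H"
  proof (induction rule: zhu_gen.induct)
    case (gen a)
    then show ?case using assms by blast
  next
    case (ideal x)
    then show ?case by (rule zhu_gen.ideal)
  next
    case (add x y)
    then show ?case by (blast intro: zhu_gen.add)
  next
    case (smult x c)
    then show ?case by (blast intro: zhu_gen.smult)
  next
    case (mult x y)
    then show ?case by (blast intro: zhu_gen.mult)
  qed
qed

context voa_ctx
begin

lemma core:
  assumes u: "u \<in> wsp V wtu" and pp: "perm_prop V u W"
    and z: "\<forall>v\<in>W. \<forall>j\<ge>0. md V u j v = 0"
    and x: "x \<in> AuW_reps V u W"
  shows "\<exists>y\<in>module.span (scal V) {ordmon V u n i v | i v. v \<in> W}. x - y \<in> Ocirc V n"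
proof -
  obtain ks v where xk: "x = umon V u ks v" "v \<in> W" "\<forall>k\<in>set ks. k \<ge> 1"
    using x unfolding AuW_reps_def by blast
  have "x \<in> vs.span ({ordmon V u n i v' | i v'. v' \<in> W} \<union> OG n)"
    using main_red[OF u pp xk(2), of "length ks" n] z xk by blast
  then obtain a b where ab: "x = a + b" "a \<in> vs.span {ordmon V u n i v' | i v'. v' \<in> W}" "b \<in> vs.span (OG n)"
    unfolding vs.span_Un by blast
  have "x - a \<in> Ocirc V n" using ab Ocirc_OG by simp
  then show ?thesis using ab(2) by blast
qed

lemma zero_On: "0 \<in> On V n"
proof -
  have "0 \<in> OL V" unfolding OL_def Lop_def by (auto intro!: exI[of _ 0])
  moreover have "(0::'v) \<in> Ocirc V n" unfolding Ocirc_def by (rule vs.span_zero)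
  ultimately show ?thesis unfolding On_def by force
qed

lemma Ocirc_On: "Ocirc V n \<subseteq> On V n"
proof
  fix y assume "y \<in> Ocirc V n"
  moreover have "0 \<in> OL V" unfolding OL_def Lop_def by (auto intro!: exI[of _ 0])
  ultimately show "y \<in> On V n" unfolding On_def by force
qed

lemma zhu_subspace: "vs.subspace (zhu_gen V n G)"
  unfolding vs.subspace_def
  using zero_On zhu_gen.ideal zhu_gen.add zhu_gen.smult by blast

end

theorem proposition3p6:
  fixes V :: "('v::ab_group_add) voa" and n :: nat and u :: 'v and wtu :: int
  assumes "is_VOA V"
    and "u \<in> wsp V wtu" and "wtu \<ge> - int n"
    and "\<forall>a\<in>Vu V u. \<forall>b\<in>Vu V u. \<forall>k. md V a k b \<in> Vu V u"
    and "perm_prop V u (Vu V u)"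
  shows "zhu_gen V n (Vu V u) = zhu_gen V n {ordmon V u n i (vac V) | i. True}
         \<and> (\<forall>W. acts_strongly V u W \<longrightarrow>
           (\<forall>x\<in>AuW_reps V u W. \<exists>y\<in>module.span (scal V) {ordmon V u n i v | i v. v \<in> W}.
              x - y \<in> Ocirc V n))"
proof -
  interpret voa_ctx V by (rule voa_ctx.intro) (rule assms(1))
  have P2: "\<forall>W. acts_strongly V u W \<longrightarrow>
           (\<forall>x\<in>AuW_reps V u W. \<exists>y\<in>module.span (scal V) {ordmon V u n i v | i v. v \<in> W}.
              x - y \<in> Ocirc V n)"
  proof (intro allI impI ballI)
    fix W x assume as: "acts_strongly V u W" and x: "x \<in> AuW_reps V u W"
    have pp: "perm_prop V u W" using as unfolding acts_strongly_def by blast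
    have z: "\<forall>v\<in>W. \<forall>j\<ge>0. md V u j v = 0" using as u_Vu unfolding acts_strongly_def by blast
    show "\<exists>y\<in>module.span (scal V) {ordmon V u n i v | i v. v \<in> W}. x - y \<in> Ocirc V n"
      by (rule core[OF assms(2) pp z x])
  qed
  define G where "G = {ordmon V u n i (vac V) | i. True}"
  have ppv: "perm_prop V u {vac V}"
    using assms(5) vac_Vu unfolding perm_prop_def by blast
  have zv: "\<forall>v\<in>{vac V}. \<forall>j\<ge>0. md V u j v = 0" using ax_cre by blast
  have GW: "{ordmon V u n i v | i v. v \<in> {vac V}} = G" unfolding G_def by blast
  have spG: "vs.span G \<subseteq> zhu_gen V n G"
    by (rule vs.span_minimal[OF _ zhu_subspace]) (auto intro: zhu_gen.gen)
  have VuG: "Vu V u \<subseteq> zhu_gen V n G"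
    unfolding Vu_def
  proof (rule vs.span_minimal[OF _ zhu_subspace], rule subsetI)
    fix x assume "x \<in> {umon V u ks (vac V) |ks. \<forall>k\<in>set ks. 1 \<le> k}"
    then have x: "x \<in> AuW_reps V u {vac V}" unfolding AuW_reps_def by blast
    obtain y where y: "y \<in> vs.span G" "x - y \<in> Ocirc V n"
      using core[OF assms(2) ppv zv x] GW by auto
    have "y \<in> zhu_gen V n G" using y(1) spG by blast
    moreover have "x - y \<in> zhu_gen V n G" using y(2) Ocirc_On zhu_gen.ideal by blast
    ultimately have "y + (x - y) \<in> zhu_gen V n G" by (rule zhu_gen.add)
    then show "x \<in> zhu_gen V n G" by simp
  qed
  have GVu: "G \<subseteq> Vu V u"
  proof
    fix x assume "x \<in> G"
    then obtain i where "x = umon V u (olist n i) (vac V)" unfolding G_def ordmon_umon by blast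
    then show "x \<in> Vu V u" unfolding Vu_def
      by (intro vs.span_base) (auto dest: olist_ge1)
  qed
  have "zhu_gen V n (Vu V u) = zhu_gen V n G"
  proof
    show "zhu_gen V n (Vu V u) \<subseteq> zhu_gen V n G" by (rule zhu_gen_mono[OF VuG])
    show "zhu_gen V n G \<subseteq> zhu_gen V n (Vu V u)"
      by (rule zhu_gen_mono) (use GVu zhu_gen.gen in blast)
  qed
  then show ?thesis using P2 unfolding G_def by blast
qed

end
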